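(* Let $P=\{x\in\mathbb R^n : Ax=b,\ Bx\le d\}$ with $A\in\mathbb R^{m_A\times n}$, $B\in\mathbb R^{m_B\times n}$ be a pointed polyhedron and let $x_1,x_2$ be distinct points of $P$. Set $u:=x_2-x_1$ and let $C_{A,B,u}$ be the intersection of the cone $\{(x,y^+,y^-)\in\mathbb R^{n+2m_B} : Ax=0,\ Bx=y^+-y^-,\ y^+,y^-\ge 0\}$ with the hyperplanes $y^-_i=0$ for each $i$ with $(Bu)_i\ge 0$ and $y^+_i=0$ for each $i$ with $(Bu)_i\le 0$. Then for every extreme ray $(g,y^+,y^-)$ of $C_{A,B,u}$, the vector $g$ (which is a circuit direction of $P$ sign-compatible with $u$ with respect to $B$) is a strictly feasible direction at $x_1$ in $P$.
   Context: $P$ is pointed means $\operatorname{rank}\binom{A}{B}=n$. The circuits of $P$ are the $g\in\ker(A)\setminus\{0\}$ (normalized to coprime integer components) for which no $x\in\ker(A)\setminus\{0\}$ satisfies $\operatorname{supp}(Bx)\subsetneq\operatorname{supp}(Bg)$; a circuit direction is a positive multiple of a circuit. Vectors $x,y$ are sign-compatible with respect to $B$ if $(Bx)_i(By)_i\ge0$ for all $i$. A direction $g$ is strictly feasible at $x_1\in P$ if $x_1+\alpha g\in P$ for some $\alpha>0$. *)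

theory Defs
  imports "HOL-Analysis.Analysis"
begin

definition polyhedron ::
  "real^'n^'ma \<Rightarrow> real^'ma \<Rightarrow> real^'n^'mb \<Rightarrow> real^'mb \<Rightarrow> (real^'n) set" where
  "polyhedron A b B d = {x. A *v x = b \<and> (\<forall>i. (B *v x) $ i \<le> d $ i)}"

definition stack_matrix :: "real^'n^'ma \<Rightarrow> real^'n^'mb \<Rightarrow> real^'n^('ma + 'mb)" where
  "stack_matrix A B = (\<chi> i. case i of Inl j \<Rightarrow> A $ j | Inr j \<Rightarrow> B $ j)"

definition pointed :: "real^'n^'ma \<Rightarrow> real^'n^'mb \<Rightarrow> bool" where
  "pointed A B \<longleftrightarrow> rank (stack_matrix A B) = CARD('n)"

definition cone_C ::
  "real^'n^'ma \<Rightarrow> real^'n^'mb \<Rightarrow> real^'n \<Rightarrow> ((real^'n) \<times> (real^'mb) \<times> (real^'mb)) set" where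
  "cone_C A B u = {(x, yp, ym).
      A *v x = 0 \<and> B *v x = yp - ym \<and> (\<forall>i. yp $ i \<ge> 0 \<and> ym $ i \<ge> 0) \<and>
      (\<forall>i. (B *v u) $ i \<ge> 0 \<longrightarrow> ym $ i = 0) \<and>
      (\<forall>i. (B *v u) $ i \<le> 0 \<longrightarrow> yp $ i = 0)}"

definition extreme_ray :: "'a::real_vector \<Rightarrow> 'a set \<Rightarrow> bool" where
  "extreme_ray r K \<longleftrightarrow> r \<noteq> 0 \<and> r \<in> K \<and> (\<lambda>t. t *\<^sub>R r) ` {0..} face_of K"

definition strictly_feasible :: "real^'n \<Rightarrow> real^'n \<Rightarrow> (real^'n) set \<Rightarrow> bool" where
  "strictly_feasible g x1 P \<longleftrightarrow> (\<exists>\<alpha>>0. x1 + \<alpha> *\<^sub>R g \<in> P)"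

end

theory Submission
  imports Defs
begin

theorem corollary4:
  fixes A :: "real^'n^'ma" and b :: "real^'ma"
    and B :: "real^'n^'mb" and d :: "real^'mb"
    and x1 x2 g :: "real^'n" and yp ym :: "real^'mb"
  assumes "pointed A B"
    and "x1 \<in> polyhedron A b B d" and "x2 \<in> polyhedron A b B d" and "x1 \<noteq> x2"
    and "extreme_ray (g, yp, ym) (cone_C A B (x2 - x1))"
  shows "strictly_feasible g x1 (polyhedron A b B d)"
proof -
  have C: "(g, yp, ym) \<in> cone_C A B (x2 - x1)" using assms(5) by (simp add: extreme_ray_def)
  hence Ag: "A *v g = 0" and Bg: "B *v g = yp - ym" and nn: "\<forall>i. yp $ i \<ge> 0 \<and> ym $ i \<ge> 0"
    and z: "\<forall>i. (B *v (x2 - x1)) $ i \<le> 0 \<longrightarrow> yp $ i = 0"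
    by (auto simp: cone_C_def)
  have x1: "A *v x1 = b" "\<And>i. (B *v x1) $ i \<le> d $ i" using assms(2) by (auto simp: polyhedron_def)
  have x2: "\<And>i. (B *v x2) $ i \<le> d $ i" using assms(3) by (auto simp: polyhedron_def)
  have slack: "(B *v x1) $ i < d $ i" if "(B *v g) $ i > 0" for i
  proof -
    have "yp $ i > 0" using that Bg nn[rule_format, of i] by (auto simp: vector_minus_component)
    hence "(B *v (x2 - x1)) $ i > 0" using z[rule_format, of i] by (metis less_irrefl not_le)
    hence "(B *v x1) $ i < (B *v x2) $ i" by (simp add: matrix_vector_mult_diff_distrib)
    thus ?thesis using x2[of i] by linarith
  qed
  define S where "S = insert 1 ((\<lambda>i. (d $ i - (B *v x1) $ i) / (B *v g) $ i) ` {i. (B *v g) $ i > 0})"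
  define \<alpha> where "\<alpha> = Min S"
  have fin: "finite S" "S \<noteq> {}" by (auto simp: S_def)
  have pos: "\<forall>s\<in>S. s > 0" using slack by (auto simp: S_def)
  have apos: "\<alpha> > 0" using fin pos by (simp add: \<alpha>_def)
  have "\<forall>i. (B *v (x1 + \<alpha> *\<^sub>R g)) $ i \<le> d $ i"
  proof
    fix i
    have eq: "(B *v (x1 + \<alpha> *\<^sub>R g)) $ i = (B *v x1) $ i + \<alpha> * (B *v g) $ i"
      by (simp add: matrix_vector_right_distrib matrix_vector_mult_scaleR)
    show "(B *v (x1 + \<alpha> *\<^sub>R g)) $ i \<le> d $ i"
    proof (cases "(B *v g) $ i > 0")
      case True
      have "\<alpha> \<le> (d $ i - (B *v x1) $ i) / (B *v g) $ i"
        unfolding \<alpha>_def using fin True by (intro Min_le) (auto simp: S_def)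
      hence "\<alpha> * (B *v g) $ i \<le> d $ i - (B *v x1) $ i" using True by (simp add: pos_le_divide_eq)
      then show ?thesis using eq by linarith
    next
      case False
      hence "\<alpha> * (B *v g) $ i \<le> 0" using apos by (simp add: mult_nonneg_nonpos)
      then show ?thesis using eq x1(2)[of i] by linarith
    qed
  qed
  moreover have "A *v (x1 + \<alpha> *\<^sub>R g) = b"
    using x1(1) Ag by (simp add: matrix_vector_right_distrib matrix_vector_mult_scaleR)
  ultimately show ?thesis using apos unfolding strictly_feasible_def polyhedron_def by blast
qed

end
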